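(* Let $f:\mathbb{B}\to\mathbb{H}$ be an arbitrary function and assume that the $3\times 3$ Pick matrix $P_f(z_1,z_2,z_3)$ is positive semidefinite for every $(z_1,z_2,z_3)\in\mathbb{B}^3$. Then $f$ belongs to the left Schur class $\mathcal{QS}_L$; that is, there exist $f_k\in\mathbb{H}$ with $\limsup_{k\to\infty}\sqrt[k]{|f_k|}\le 1$ such that $f(z)=\sum_{k=0}^\infty z^k f_k$ for all $z\in\mathbb{B}$ (the series converging absolutely), and $|f(z)|\le 1$ for all $z\in\mathbb{B}$.
   Context: $\mathbb{H}$ denotes the real quaternions $x_0+\mathbf{i}x_1+\mathbf{j}x_2+\mathbf{k}x_3$ with $\mathbf{i}^2=\mathbf{j}^2=\mathbf{k}^2=\mathbf{ijk}=-1$; $\bar\alpha$ is the quaternionic conjugate and $|\alpha|^2=\alpha\bar\alpha$. $\mathbb{B}=\{\alpha\in\mathbb{H}:|\alpha|<1\}$. For $z_1,\dots,z_n\in\mathbb{B}$ the Pick matrix of $f$ is the quaternionic $n\times n$ matrix $P_f(z_1,\dots,z_n)=\Big[\sum_{k=0}^\infty z_i^k\,(1-f(z_i)\overline{f(z_j)})\,\bar z_j^{\,k}\Big]_{i,j=1}^n$ (the series converge absolutely); it is the unique solution $P$ of $P-TPT^*=EE^*-NN^*$ with $T=\mathrm{diag}(z_1,\dots,z_n)$, $E=(1,\dots,1)^\top$, $N=(f(z_1),\dots,f(z_n))^\top$. A quaternionic matrix $A\in\mathbb{H}^{n\times n}$ is positive semidefinite if $A=A^*$ (conjugate transpose) and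 $x^*Ax\ge 0$ for all $x\in\mathbb{H}^n$. The left Schur class $\mathcal{QS}_L$ consists of functions $f:\mathbb{B}\to\mathbb{H}$ of the form $f(z)=\sum_{k\ge0} z^k f_k$ with quaternion coefficients on the right, $\limsup_k\sqrt[k]{|f_k|}\le1$, and $|f(\alpha)|\le 1$ for all $\alpha\in\mathbb{B}$. *)

theory Defs
  imports "HOL-Analysis.Analysis"
begin

text \<open>Quaternion x0 + i x1 + j x2 + k x3 with i^2 = j^2 = k^2 = ijk = -1.\<close>

datatype quat = Quat (qRe: real) (qIm1: real) (qIm2: real) (qIm3: real)

lemma quat_eq_iff: "x = y \<longleftrightarrow> qRe x = qRe y \<and> qIm1 x = qIm1 y \<and> qIm2 x = qIm2 y \<and> qIm3 x = qIm3 y"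
  by (cases x; cases y) auto

lemma quat_eqI: "qRe x = qRe y \<Longrightarrow> qIm1 x = qIm1 y \<Longrightarrow> qIm2 x = qIm2 y \<Longrightarrow> qIm3 x = qIm3 y \<Longrightarrow> x = y"
  by (simp add: quat_eq_iff)

instantiation quat :: ab_group_add
begin
definition "0 = Quat 0 0 0 0"
definition "x + y = Quat (qRe x + qRe y) (qIm1 x + qIm1 y) (qIm2 x + qIm2 y) (qIm3 x + qIm3 y)"
definition "- x = Quat (- qRe x) (- qIm1 x) (- qIm2 x) (- qIm3 x)"
definition "x - y = Quat (qRe x - qRe y) (qIm1 x - qIm1 y) (qIm2 x - qIm2 y) (qIm3 x - qIm3 y)"
instance by standard (simp_all add: quat_eq_iff zero_quat_def plus_quat_def uminus_quat_def minus_quat_def)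
end

lemma quat_add_simps [simp]:
  "qRe 0 = 0" "qIm1 0 = 0" "qIm2 0 = 0" "qIm3 0 = 0"
  "qRe (x + y) = qRe x + qRe y" "qIm1 (x + y) = qIm1 x + qIm1 y"
  "qIm2 (x + y) = qIm2 x + qIm2 y" "qIm3 (x + y) = qIm3 x + qIm3 y"
  "qRe (- x) = - qRe x" "qIm1 (- x) = - qIm1 x" "qIm2 (- x) = - qIm2 x" "qIm3 (- x) = - qIm3 x"
  "qRe (x - y) = qRe x - qRe y" "qIm1 (x - y) = qIm1 x - qIm1 y"
  "qIm2 (x - y) = qIm2 x - qIm2 y" "qIm3 (x - y) = qIm3 x - qIm3 y"
  by (simp_all add: zero_quat_def plus_quat_def uminus_quat_def minus_quat_def)

instantiation quat :: real_vector
begin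
definition "scaleR r x = Quat (r * qRe x) (r * qIm1 x) (r * qIm2 x) (r * qIm3 x)"
instance by standard (simp_all add: quat_eq_iff scaleR_quat_def algebra_simps)
end

lemma quat_scaleR_simps [simp]:
  "qRe (scaleR r x) = r * qRe x" "qIm1 (scaleR r x) = r * qIm1 x"
  "qIm2 (scaleR r x) = r * qIm2 x" "qIm3 (scaleR r x) = r * qIm3 x"
  by (simp_all add: scaleR_quat_def)

instantiation quat :: ring_1
begin
definition "1 = Quat 1 0 0 0"
definition "x * y = Quat
   (qRe x * qRe y - qIm1 x * qIm1 y - qIm2 x * qIm2 y - qIm3 x * qIm3 y)
   (qRe x * qIm1 y + qIm1 x * qRe y + qIm2 x * qIm3 y - qIm3 x * qIm2 y)
   (qRe x * qIm2 y - qIm1 x * qIm3 y + qIm2 x * qRe y + qIm3 x * qIm1 y)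
   (qRe x * qIm3 y + qIm1 x * qIm2 y - qIm2 x * qIm1 y + qIm3 x * qRe y)"
instance by standard (simp_all add: quat_eq_iff one_quat_def times_quat_def algebra_simps)
end

lemma quat_mult_simps [simp]:
  "qRe 1 = 1" "qIm1 1 = 0" "qIm2 1 = 0" "qIm3 1 = 0"
  "qRe (x * y) = qRe x * qRe y - qIm1 x * qIm1 y - qIm2 x * qIm2 y - qIm3 x * qIm3 y"
  "qIm1 (x * y) = qRe x * qIm1 y + qIm1 x * qRe y + qIm2 x * qIm3 y - qIm3 x * qIm2 y"
  "qIm2 (x * y) = qRe x * qIm2 y - qIm1 x * qIm3 y + qIm2 x * qRe y + qIm3 x * qIm1 y"
  "qIm3 (x * y) = qRe x * qIm3 y + qIm1 x * qIm2 y - qIm2 x * qIm1 y + qIm3 x * qRe y"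
  by (simp_all add: one_quat_def times_quat_def)

definition qcnj :: "quat \<Rightarrow> quat" where
  "qcnj x = Quat (qRe x) (- qIm1 x) (- qIm2 x) (- qIm3 x)"

lemma qcnj_simps [simp]:
  "qRe (qcnj x) = qRe x" "qIm1 (qcnj x) = - qIm1 x" "qIm2 (qcnj x) = - qIm2 x" "qIm3 (qcnj x) = - qIm3 x"
  by (simp_all add: qcnj_def)

definition qnormsq :: "quat \<Rightarrow> real" where
  "qnormsq x = (qRe x)\<^sup>2 + (qIm1 x)\<^sup>2 + (qIm2 x)\<^sup>2 + (qIm3 x)\<^sup>2"

instantiation quat :: division_ring
begin
definition "inverse x = scaleR (inverse (qnormsq x)) (qcnj x)"
definition "x div y = x * inverse (y :: quat)"
instance
proof
  fix x y :: quat
  assume "x \<noteq> 0"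
  then have n: "qnormsq x \<noteq> 0"
    by (auto simp: qnormsq_def quat_eq_iff add_nonneg_eq_0_iff)
  have sl: "scaleR r a * b = scaleR r (a * b)" "a * scaleR r b = scaleR r (a * b)" for r and a b :: quat
    by (simp_all add: quat_eq_iff algebra_simps)
  have c1: "qcnj x * x = Quat (qnormsq x) 0 0 0" "x * qcnj x = Quat (qnormsq x) 0 0 0"
    by (simp_all add: quat_eq_iff qnormsq_def power2_eq_square algebra_simps)
  show "inverse x * x = 1"
    using n by (simp add: inverse_quat_def sl c1 quat_eq_iff)
  show "x * inverse x = 1"
    using n by (simp add: inverse_quat_def sl c1 quat_eq_iff)
next
  fix x y :: quat
  show "x div y = x * inverse y" by (simp add: divide_quat_def)
next
  show "inverse (0::quat) = 0" by (simp add: inverse_quat_def quat_eq_iff)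
qed
end

text \<open>Embedding into a Euclidean space, used only to transfer the triangle inequality.\<close>

definition qvec :: "quat \<Rightarrow> (real \<times> real) \<times> (real \<times> real)" where
  "qvec x = ((qRe x, qIm1 x), (qIm2 x, qIm3 x))"

instantiation quat :: real_normed_div_algebra
begin
definition "norm x = sqrt (qnormsq x)"
definition "sgn x = x /\<^sub>R norm (x::quat)"
definition "dist x y = norm (x - y :: quat)"
definition uniformity_quat_def [code del]:
  "(uniformity :: (quat \<times> quat) filter) = (INF e\<in>{0 <..}. principal {(x, y). dist x y < e})"
definition open_quat_def [code del]:
  "open (U :: quat set) \<longleftrightarrow> (\<forall>x\<in>U. eventually (\<lambda>(x', y). x' = x \<longrightarrow> y \<in> U) uniformity)"
instance
proof
  fix r :: real and x y :: quat
  have nv: "norm z = norm (qvec z)" for z :: quat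
    by (simp add: norm_quat_def qvec_def norm_Pair qnormsq_def real_sqrt_sum_squares_triangle_ineq add.assoc)
  show "(norm x = 0) = (x = 0)"
    by (auto simp: norm_quat_def qnormsq_def quat_eq_iff add_nonneg_eq_0_iff)
  have "qvec (x + y) = qvec x + qvec y" by (simp add: qvec_def)
  then show "norm (x + y) \<le> norm x + norm y"
    by (simp add: nv norm_triangle_ineq)
  show "norm (scaleR r x) = \<bar>r\<bar> * norm x"
    by (simp add: norm_quat_def qnormsq_def power_mult_distrib distrib_left [symmetric] real_sqrt_mult)
  show "norm (x * y) = norm x * norm y"
    by (simp add: norm_quat_def qnormsq_def real_sqrt_mult [symmetric] power2_eq_square algebra_simps)
  show "scaleR r x * y = scaleR r (x * y)" by (simp add: quat_eq_iff algebra_simps)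
  show "x * scaleR r y = scaleR r (x * y)" by (simp add: quat_eq_iff algebra_simps)
qed (rule sgn_quat_def dist_quat_def open_quat_def uniformity_quat_def)+
end

lemma dist_quat_qvec: "dist x y = dist (qvec x) (qvec y)"
  by (simp add: dist_quat_def dist_norm norm_quat_def qvec_def norm_Pair qnormsq_def add.assoc)

instance quat :: banach
proof
  fix X :: "nat \<Rightarrow> quat"
  assume "Cauchy X"
  then have "Cauchy (\<lambda>n. qvec (X n))"
    by (simp add: Cauchy_def dist_quat_qvec)
  then obtain L where L: "(\<lambda>n. qvec (X n)) \<longlonglongrightarrow> L"
    using Cauchy_convergent_iff convergent_def by blast
  define q where "q = Quat (fst (fst L)) (snd (fst L)) (fst (snd L)) (snd (snd L))"
  have "qvec q = L" by (simp add: q_def qvec_def)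
  then have "X \<longlonglongrightarrow> q"
    using L by (simp add: lim_sequentially dist_quat_qvec)
  then show "convergent X" by (rule convergentI)
qed

definition qball :: "quat set" where
  "qball = {a. norm a < 1}"

text \<open>Pick matrix of f at the points z 0, ..., z (n-1), as a function of the indices
  (only entries with i, j < n are meaningful).\<close>
definition pick_matrix :: "(quat \<Rightarrow> quat) \<Rightarrow> (nat \<Rightarrow> quat) \<Rightarrow> nat \<Rightarrow> nat \<Rightarrow> quat" where
  "pick_matrix f z i j =
     (\<Sum>k. z i ^ k * (1 - f (z i) * qcnj (f (z j))) * qcnj (z j) ^ k)"

definition quat_nonneg :: "quat \<Rightarrow> bool" where
  "quat_nonneg q \<longleftrightarrow> q \<in> \<real> \<and> 0 \<le> qRe q"

definition quat_psd :: "nat \<Rightarrow> (nat \<Rightarrow> nat \<Rightarrow> quat) \<Rightarrow> bool" where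
  "quat_psd n A \<longleftrightarrow>
     (\<forall>i<n. \<forall>j<n. A i j = qcnj (A j i)) \<and>
     (\<forall>x :: nat \<Rightarrow> quat. quat_nonneg (\<Sum>i<n. \<Sum>j<n. qcnj (x i) * A i j * x j))"

definition left_schur_class :: "(quat \<Rightarrow> quat) set" where
  "left_schur_class = {f. \<exists>c :: nat \<Rightarrow> quat.
      limsup (\<lambda>k. ereal (root k (norm (c k)))) \<le> 1 \<and>
      (\<forall>z\<in>qball. summable (\<lambda>k. norm (z ^ k * c k)) \<and> f z = (\<Sum>k. z ^ k * c k)) \<and>
      (\<forall>z\<in>qball. norm (f z) \<le> 1)}"

end

theory Submission
  imports Defs "HOL-Complex_Analysis.Complex_Analysis"
begin


lemma sum3: "(\<Sum>s<(3::nat). h s) = h 0 + h 1 + h 2"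
  by (simp add: eval_nat_numeral)

lemma cmod_sq: "cmod B * cmod B = Re B * Re B + Im B * Im B"
  by (metis cmod_power2 power2_eq_square)

lemma mob_id:
  fixes c x y :: complex
  assumes "1 - cnj c * x \<noteq> 0" "1 - cnj c * y \<noteq> 0"
  shows "1 - ((x - c)/(1 - cnj c * x)) * cnj ((y - c)/(1 - cnj c * y)) =
     (1 - c*cnj c) * (1 - x * cnj y) / ((1 - cnj c * x) * cnj (1 - cnj c * y))"
proof -
  have n: "1 - c * cnj y \<noteq> 0" using assms(2) by (metis complex_cnj_cnj complex_cnj_diff complex_cnj_mult complex_cnj_one complex_cnj_zero_iff)
  have e: "cnj ((y - c)/(1 - cnj c * y)) = (cnj y - cnj c)/(1 - c * cnj y)" by simp
  have "1 - ((x - c)/(1 - cnj c * x)) * cnj ((y - c)/(1 - cnj c * y)) =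
     ((1 - cnj c * x) * (1 - c * cnj y) - (x - c) * (cnj y - cnj c)) / ((1 - cnj c * x) * (1 - c * cnj y))"
    unfolding e using assms(1) n by (simp add: divide_simps)
  also have "(1 - cnj c * x) * (1 - c * cnj y) - (x - c) * (cnj y - cnj c) = (1 - c*cnj c) * (1 - x * cnj y)"
    by (simp add: algebra_simps)
  finally show ?thesis by simp
qed

lemma psd2:
  fixes a c :: real and B :: complex
  assumes "\<And>y1 y2. 0 \<le> Re (cnj y1 * y1 * a + cnj y1 * y2 * B + cnj y2 * y1 * cnj B + cnj y2 * y2 * c)"
  shows "0 \<le> a" "0 \<le> c" "(cmod B)\<^sup>2 \<le> a * c"
proof -
  show a0: "0 \<le> a" using assms[of 1 0] by simp
  show c0: "0 \<le> c" using assms[of 0 1] by simp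
  show "(cmod B)\<^sup>2 \<le> a * c"
  proof (cases "c = 0")
    case False
    then have cp: "c > 0" using c0 by simp
    have "0 \<le> Re (cnj (of_real c) * of_real c * a + cnj (of_real c) * (- cnj B) * B + cnj (- cnj B) * of_real c * cnj B + cnj (- cnj B) * (- cnj B) * c)"
      using assms by blast
    also have "\<dots> = c * (a * c - (cmod B)\<^sup>2)"
      by (simp add: cmod_sq algebra_simps power2_eq_square)
    finally show ?thesis using cp by (simp add: zero_le_mult_iff)
  next
    case True
    show ?thesis
    proof (rule ccontr)
      assume "\<not> ?thesis"
      then have Bp: "(cmod B)\<^sup>2 > 0" using True by simp
      define t where "t = (a + 1) / (cmod B)\<^sup>2"
      have "0 \<le> Re (cnj 1 * 1 * a + cnj 1 * (- of_real t * cnj B) * B + cnj (- of_real t * cnj B) * 1 * cnj B + cnj (- of_real t * cnj B) * (- of_real t * cnj B) * c)"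
        using assms by blast
      also have "\<dots> = a - 2 * t * (cmod B)\<^sup>2"
        using True by (simp add: cmod_sq algebra_simps power2_eq_square)
      also have "\<dots> = a - 2 * (a + 1)" using Bp by (simp add: t_def)
      finally show False using a0 by simp
    qed
  qed
qed

lemma pick_ident: "(cmod (1 - u * cnj v))\<^sup>2 = (1 - (cmod u)\<^sup>2) * (1 - (cmod v)\<^sup>2) + (cmod (u - v))\<^sup>2"
  by (simp only: cmod_power2) (simp add: algebra_simps power2_eq_square)

lemma mult_cnj_real: "p * cnj p = of_real ((cmod p)\<^sup>2)"
  by (simp add: complex_norm_square[symmetric])

definition kern :: "complex \<Rightarrow> complex \<Rightarrow> complex \<Rightarrow> complex \<Rightarrow> complex" where
  "kern s t p q = (1 - p * cnj q) / (1 - s * cnj t)"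

lemma kern_diag: "cmod s < 1 \<Longrightarrow> kern s s p p = of_real ((1 - (cmod p)\<^sup>2) / (1 - (cmod s)\<^sup>2))"
  unfolding kern_def mult_cnj_real by simp
   
lemma kern_cnj: "kern t s q p = cnj (kern s t p q)"
  unfolding kern_def by (simp add: mult.commute)

lemma sp2:
  fixes u v z w :: complex
  assumes z: "cmod z < 1" and w: "cmod w < 1"
  and psd: "\<And>y1 y2. 0 \<le> Re (cnj y1*y1*kern z z u u + cnj y1*y2*kern z w u v + cnj y2*y1*kern w z v u + cnj y2*y2*kern w w v v)"
  shows "cmod u \<le> 1" "cmod v \<le> 1" "cmod (u - v) * cmod (1 - z*cnj w) \<le> 2 * cmod (z - w)"
proof -
  define a where "a = (1 - (cmod u)\<^sup>2)/(1-(cmod z)\<^sup>2)"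
  define c where "c = (1 - (cmod v)\<^sup>2)/(1-(cmod w)\<^sup>2)"
  define B where "B = kern z w u v"
  have "\<And>y1 y2. 0 \<le> Re (cnj y1 * y1 * a + cnj y1 * y2 * B + cnj y2 * y1 * cnj B + cnj y2 * y2 * c)"
    using psd unfolding a_def c_def B_def kern_diag[OF z] kern_diag[OF w] kern_cnj[of w z v u] by simp
  note P = psd2[OF this]
  have z1: "1 - (cmod z)\<^sup>2 > 0" and w1: "1 - (cmod w)\<^sup>2 > 0"
    using z w by (simp_all add: abs_square_less_1)
  have u1: "1 - (cmod u)\<^sup>2 \<ge> 0" using P(1) z1 unfolding a_def by (simp add: zero_le_divide_iff)
  have v1: "1 - (cmod v)\<^sup>2 \<ge> 0" using P(2) w1 unfolding c_def by (simp add: zero_le_divide_iff)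
  show uu: "cmod u \<le> 1" using u1 by (simp add: abs_square_le_1)
  show vv: "cmod v \<le> 1" using v1 by (simp add: abs_square_le_1)
  have zw: "cmod (z * cnj w) < 1" 
  proof -
    have "cmod z * cmod w \<le> cmod z" using w by (simp add: mult_left_le)
    then show ?thesis using z by (simp add: norm_mult)
  qed
  then have Qp: "cmod (1 - z * cnj w) > 0"
    by (metis norm_minus_commute norm_triangle_ineq2 less_le_not_le diff_gt_0_iff_gt order_le_less_trans norm_one  zero_less_norm_iff right_minus_eq)
  define PP where "PP = (cmod (1 - u * cnj v))\<^sup>2"
  define Q where "Q = (cmod (1 - z * cnj w))\<^sup>2"
  define a' where "a' = (1 - (cmod u)\<^sup>2) * (1 - (cmod v)\<^sup>2)"
  define b' where "b' = (1 - (cmod z)\<^sup>2) * (1 - (cmod w)\<^sup>2)"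
  define d where "d = (cmod (u - v))\<^sup>2"
  define e where "e = (cmod (z - w))\<^sup>2"
  have Q0: "Q > 0" using Qp by (simp add: Q_def)
  have b0: "b' > 0" using z1 w1 by (simp add: b'_def)
  have "(cmod B)\<^sup>2 = PP / Q" by (simp add: B_def kern_def PP_def Q_def norm_divide power_divide)
  moreover have "a * c = a' / b'" by (simp add: a_def c_def a'_def b'_def)
  ultimately have "PP / Q \<le> a' / b'" using P(3) by simp
  then have i1: "PP * b' \<le> a' * Q" using Q0 b0 by (simp add: divide_simps mult.commute)
  have idz: "Q = b' + e" unfolding Q_def b'_def e_def by (rule pick_ident)
  have idu: "PP = a' + d" unfolding PP_def a'_def d_def by (rule pick_ident)
  have "d * Q \<le> PP * e" using i1 idz idu by (simp add: algebra_simps)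
  also have "PP \<le> 4"
  proof -
    have "cmod (1 - u * cnj v) \<le> 1 + cmod u * cmod v"
      by (metis norm_triangle_ineq4 norm_one norm_mult complex_mod_cnj)
    also have "\<dots> \<le> 2" using uu vv by (smt (verit) mult_le_one norm_ge_zero)
    finally have "cmod (1 - u * cnj v) \<le> 2" .
    then have "(cmod (1 - u * cnj v))\<^sup>2 \<le> 2\<^sup>2" by (rule power_mono) simp
    then show ?thesis unfolding PP_def by simp
  qed
  then have "PP * e \<le> 4 * e" by (simp add: e_def mult_right_mono)
  finally have "(cmod (u - v) * cmod (1 - z*cnj w))\<^sup>2 \<le> (2 * cmod (z - w))\<^sup>2"
    by (simp add: d_def Q_def e_def power_mult_distrib)
  then show "cmod (u - v) * cmod (1 - z*cnj w) \<le> 2 * cmod (z - w)"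
    by (rule power2_le_imp_le) simp
qed

definition pickC :: "(complex \<Rightarrow> complex) \<Rightarrow> bool" where
  "pickC ff \<longleftrightarrow> (\<forall>p x. (\<forall>s<(3::nat). cmod (p s) < 1) \<longrightarrow>
      0 \<le> Re (\<Sum>s<3. \<Sum>t<3. cnj (x s) * x t * kern (p s) (p t) (ff (p s)) (ff (p t))))"

lemma pickC3:
  assumes "pickC ff" "cmod p0 < 1" "cmod p1 < 1" "cmod p2 < 1"
  shows "0 \<le> Re (cnj x0 * x0 * kern p0 p0 (ff p0) (ff p0) + cnj x0 * x1 * kern p0 p1 (ff p0) (ff p1) + cnj x0 * x2 * kern p0 p2 (ff p0) (ff p2)
    + (cnj x1 * x0 * kern p1 p0 (ff p1) (ff p0) + cnj x1 * x1 * kern p1 p1 (ff p1) (ff p1) + cnj x1 * x2 * kern p1 p2 (ff p1) (ff p2))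
    + (cnj x2 * x0 * kern p2 p0 (ff p2) (ff p0) + cnj x2 * x1 * kern p2 p1 (ff p2) (ff p1) + cnj x2 * x2 * kern p2 p2 (ff p2) (ff p2)))"
proof -
  define p where "p = (\<lambda>i::nat. if i = 0 then p0 else if i = 1 then p1 else p2)"
  define x where "x = (\<lambda>i::nat. if i = 0 then x0 else if i = 1 then x1 else x2)"
  have "\<forall>s<3. cmod (p s) < 1" using assms by (auto simp: p_def)
  then have "0 \<le> Re (\<Sum>s<3. \<Sum>t<3. cnj (x s) * x t * kern (p s) (p t) (ff (p s)) (ff (p t)))"
    using assms(1) unfolding pickC_def by blast
  then show ?thesis by (simp add: sum3 p_def x_def)
qed

lemma pickC2:
  assumes "pickC ff" "cmod z < 1" "cmod w < 1"
  shows "0 \<le> Re (cnj y1*y1*kern z z (ff z) (ff z) + cnj y1*y2*kern z w (ff z) (ff w) + cnj y2*y1*kern w z (ff w) (ff z) + cnj y2*y2*kern w w (ff w) (ff w))"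
  using pickC3[OF assms(1,2,3,3), of y1 y2 0] by simp

lemma pickC_bound:
  assumes "pickC ff" "cmod z < 1"
  shows "cmod (ff z) \<le> 1"
  using sp2(1)[OF assms(2) assms(2) pickC2[OF assms(1,2,2)]] by simp

lemma pickC_const:
  assumes "pickC ff" "cmod a < 1" "cmod w < 1" "cmod (ff a) = 1"
  shows "ff w = ff a"
proof -
  have k0: "kern a a (ff a) (ff a) = 0" using kern_diag[OF assms(2)] assms(4) by simp
  have "\<And>y1 y2. 0 \<le> Re (cnj y1 * y1 * (0::real) + cnj y1 * y2 * kern a w (ff a) (ff w) + cnj y2 * y1 * cnj (kern a w (ff a) (ff w))
      + cnj y2 * y2 * ((1 - (cmod (ff w))\<^sup>2) / (1 - (cmod w)\<^sup>2)))"
    using pickC2[OF assms(1,2,3)] k0 kern_diag[OF assms(3)] kern_cnj[of w a] by simp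
  from psd2(3)[OF this] have "kern a w (ff a) (ff w) = 0" by simp
  moreover have "1 - a * cnj w \<noteq> 0"
  proof
    assume "1 - a * cnj w = 0"
    then have "cmod (a * cnj w) = 1" by (metis eq_iff_diff_eq_0 norm_one)
    moreover have "cmod a * cmod w < 1" using assms(2,3)
      by (metis mult_le_one norm_ge_zero less_eq_real_def linorder_not_less mult_less_cancel_left1 order_le_less_trans)
    ultimately show False by (simp add: norm_mult)
  qed
  ultimately have e: "ff a * cnj (ff w) = 1" by (simp add: kern_def)
  have "cnj (ff a) * (ff a * cnj (ff w)) = cnj (ff w)"
    using assms(4) by (simp add: mult.assoc[symmetric] mult_cnj_real mult.commute[of "cnj _"])
  then have "cnj (ff w) = cnj (ff a)" using e by simp
  then show ?thesis by simp
qed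

lemma term_id:
  fixes G K As At Bs Bt Als Alt nb na vs vt :: complex
  assumes E: "G * As * cnj At = nb*K/(Bs*cnj Bt) - na/(Als*cnj Alt)" and nb: "cnj nb = nb"
    and nz: "Bs\<noteq>0" "Bt\<noteq>0" "Als \<noteq> 0" "Alt \<noteq> 0"
  shows "cnj (vs * nb / cnj Bs) * (vt * nb / cnj Bt) * K = nb * (cnj (vs * cnj As) * (vt * cnj At) * G) + nb*na*(cnj (vs / cnj Als) * (vt / cnj Alt))"
proof -
  have "cnj (vs * cnj As) * (vt * cnj At) * G = cnj vs * vt * (G * As * cnj At)" by (simp add: algebra_simps)
  also have "\<dots> = cnj vs * vt * (nb*K/(Bs*cnj Bt) - na/(Als*cnj Alt))" by (simp add: E)
  finally have e: "cnj (vs * cnj As) * (vt * cnj At) * G = \<dots>" .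
  show ?thesis unfolding e using nz nb by (simp add: field_simps)
qed

lemma assemble:
  fixes x0 x1 x2 y1 y2 m1 m2 nb na K00 K01 K02 K10 K11 K12 K20 K21 K22 G11 G12 G21 G22 :: complex
  assumes t11: "cnj x1*x1*K11 = nb*(cnj y1*y1*G11) + nb*na*(cnj m1*m1)"
    and t12: "cnj x1*x2*K12 = nb*(cnj y1*y2*G12) + nb*na*(cnj m1*m2)"
    and t21: "cnj x2*x1*K21 = nb*(cnj y2*y1*G21) + nb*na*(cnj m2*m1)"
    and t22: "cnj x2*x2*K22 = nb*(cnj y2*y2*G22) + nb*na*(cnj m2*m2)"
    and c01: "x1*K01 = nb*m1" and c02: "x2*K02 = nb*m2"
    and c10: "cnj x1*K10 = nb*cnj m1" and c20: "cnj x2*K20 = nb*cnj m2"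
    and k00: "K00 * na = nb" and x0: "x0 = -(na*(m1+m2))" and na: "cnj na = na"
  shows "cnj x0 * x0 * K00 + cnj x0 * x1 * K01 + cnj x0 * x2 * K02
    + (cnj x1 * x0 * K10 + cnj x1 * x1 * K11 + cnj x1 * x2 * K12)
    + (cnj x2 * x0 * K20 + cnj x2 * x1 * K21 + cnj x2 * x2 * K22)
    = nb * (cnj y1*y1*G11 + cnj y1*y2*G12 + cnj y2*y1*G21 + cnj y2*y2*G22)"
proof -
  have cx0: "cnj x0 = -(na*(cnj m1 + cnj m2))" using x0 na by simp
  have e1: "cnj x0 * x0 * K00 = na * nb * ((cnj m1 + cnj m2) * (m1 + m2))"
  proof -
    have "cnj x0 * x0 * K00 = (na * (cnj m1 + cnj m2)) * (m1 + m2) * (K00 * na)"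
      unfolding cx0 x0 using na by (simp add: algebra_simps)
    then show ?thesis unfolding k00 by (simp add: algebra_simps)
  qed
  have e2: "cnj x0 * x1 * K01 = - na * nb * ((cnj m1 + cnj m2) * m1)"
  proof -
    have "cnj x0 * x1 * K01 = cnj x0 * (x1 * K01)" by (simp add: mult.assoc)
    then show ?thesis unfolding c01 cx0 by (simp add: algebra_simps)
  qed
  have e3: "cnj x0 * x2 * K02 = - na * nb * ((cnj m1 + cnj m2) * m2)"
  proof -
    have "cnj x0 * x2 * K02 = cnj x0 * (x2 * K02)" by (simp add: mult.assoc)
    then show ?thesis unfolding c02 cx0 by (simp add: algebra_simps)
  qed
  have e4: "cnj x1 * x0 * K10 = - na * nb * (cnj m1 * (m1 + m2))"
  proof -
    have "cnj x1 * x0 * K10 = x0 * (cnj x1 * K10)" by (simp add: algebra_simps)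
    then show ?thesis unfolding c10 x0 by (simp add: algebra_simps)
  qed
  have e5: "cnj x2 * x0 * K20 = - na * nb * (cnj m2 * (m1 + m2))"
  proof -
    have "cnj x2 * x0 * K20 = x0 * (cnj x2 * K20)" by (simp add: algebra_simps)
    then show ?thesis unfolding c20 x0 by (simp add: algebra_simps)
  qed
  show ?thesis unfolding e1 e2 e3 e4 e5 t11 t12 t21 t22 by (simp add: algebra_simps)
qed

definition mobg :: "(complex \<Rightarrow> complex) \<Rightarrow> complex \<Rightarrow> complex \<Rightarrow> complex" where
  "mobg ff a s = ((ff s - ff a)/(1 - cnj (ff a) * ff s)) / ((s - a)/(1 - cnj a * s))"

lemma one_minus_nz:
  fixes x y :: complex
  assumes "cmod x < 1" "cmod y \<le> 1" shows "1 - cnj x * y \<noteq> 0"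
proof
  assume "1 - cnj x * y = 0"
  then have "cmod (cnj x * y) = 1" by (metis eq_iff_diff_eq_0 norm_one)
  moreover have "cmod x * cmod y < 1" using assms
    by (metis mult_le_one norm_ge_zero less_eq_real_def linorder_not_less mult_less_cancel_left1 order_le_less_trans)
  ultimately show False by (simp add: norm_mult)
qed

lemma cnj_real_form: "cnj (1 - b * cnj b) = 1 - b * cnj b"
  by (simp add: mult.commute)

lemma schur_step:
  assumes pc: "pickC ff" and a: "cmod a < 1" and b: "cmod (ff a) < 1"
    and z: "cmod z < 1" "z \<noteq> a" and w: "cmod w < 1" "w \<noteq> a"
  shows "0 \<le> Re (cnj y1*y1*kern z z (mobg ff a z) (mobg ff a z) + cnj y1*y2*kern z w (mobg ff a z) (mobg ff a w)
     + cnj y2*y1*kern w z (mobg ff a w) (mobg ff a z) + cnj y2*y2*kern w w (mobg ff a w) (mobg ff a w))"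
proof -
  define bb where "bb = ff a"
  define nb where "nb = 1 - bb * cnj bb"
  define na where "na = 1 - a * cnj a"
  define al where "al s = 1 - cnj a * s" for s
  define be where "be s = 1 - cnj bb * ff s" for s
  define A where "A s = (s - a)/al s" for s
  define X where "X s = (ff s - bb)/be s" for s
  have g: "mobg ff a s = X s / A s" for s by (simp add: mobg_def X_def A_def al_def be_def bb_def)
  have fb: "cmod (ff s) \<le> 1" if "cmod s < 1" for s using pickC_bound[OF pc that] .
  have bb1: "cmod bb < 1" using b by (simp add: bb_def)
  have alnz: "al s \<noteq> 0" if "cmod s < 1" for s unfolding al_def using one_minus_nz[OF a] that by simp
  have benz: "be s \<noteq> 0" if "cmod s < 1" for s unfolding be_def using one_minus_nz[OF bb1 fb[OF that]] .
  have Anz: "A s \<noteq> 0" if "cmod s < 1" "s \<noteq> a" for s using alnz[OF that(1)] that(2) by (simp add: A_def)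
  have nanz: "na \<noteq> 0" using alnz[OF a] by (simp add: al_def na_def mult.commute)
  have E: "kern s t (X s/A s) (X t/A t) * A s * cnj (A t) = nb * kern s t (ff s) (ff t)/(be s * cnj (be t)) - na/(al s * cnj (al t))"
    if st: "cmod s < 1" "cmod t < 1" "s \<noteq> a" "t \<noteq> a" for s t
  proof -
    have m1: "1 - A s * cnj (A t) = na*(1 - s*cnj t)/(al s * cnj(al t))"
      unfolding A_def al_def na_def using mob_id[of a s t] alnz[OF st(1)] alnz[OF st(2)] by (simp add: al_def)
    have m2: "1 - X s * cnj (X t) = nb*(1 - ff s * cnj (ff t))/(be s * cnj(be t))"
      unfolding X_def be_def nb_def using mob_id[of bb "ff s" "ff t"] benz[OF st(1)] benz[OF st(2)] by (simp add: be_def)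
    have D: "1 - s * cnj t \<noteq> 0" using one_minus_nz[of t s] st by (simp add: mult.commute)
    have "kern s t (X s/A s) (X t/A t) * A s * cnj (A t) = (A s * cnj (A t) - X s * cnj (X t))/(1 - s * cnj t)"
      unfolding kern_def using Anz[OF st(1,3)] Anz[OF st(2,4)] D by (simp add: field_simps)
    also have "A s * cnj (A t) - X s * cnj (X t) = (1 - X s * cnj (X t)) - (1 - A s * cnj (A t))" by simp
    also have "\<dots> = nb*(1 - ff s * cnj (ff t))/(be s * cnj(be t)) - na*(1 - s*cnj t)/(al s * cnj(al t))"
      unfolding m1 m2 ..
    finally show ?thesis unfolding kern_def using D by (simp add: field_simps)
  qed
  define v1 where "v1 = y1 / cnj (A z)"
  define v2 where "v2 = y2 / cnj (A w)"
  define x1 where "x1 = v1 * nb / cnj (be z)"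
  define x2 where "x2 = v2 * nb / cnj (be w)"
  define m1 where "m1 = v1 / cnj (al z)"
  define m2 where "m2 = v2 / cnj (al w)"
  define x0 where "x0 = -(na*(m1+m2))"
  have y1: "y1 = v1 * cnj (A z)" using Anz[OF z] by (simp add: v1_def)
  have y2: "y2 = v2 * cnj (A w)" using Anz[OF w] by (simp add: v2_def)
  have nbr: "cnj nb = nb" unfolding nb_def by (rule cnj_real_form)
  have nar: "cnj na = na" unfolding na_def by (rule cnj_real_form)
  note tid = term_id[OF _ nbr]
  have "0 \<le> Re (cnj x0 * x0 * kern a a (ff a) (ff a) + cnj x0 * x1 * kern a z (ff a) (ff z) + cnj x0 * x2 * kern a w (ff a) (ff w)
    + (cnj x1 * x0 * kern z a (ff z) (ff a) + cnj x1 * x1 * kern z z (ff z) (ff z) + cnj x1 * x2 * kern z w (ff z) (ff w))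
    + (cnj x2 * x0 * kern w a (ff w) (ff a) + cnj x2 * x1 * kern w z (ff w) (ff z) + cnj x2 * x2 * kern w w (ff w) (ff w)))"
    by (rule pickC3[OF pc a z(1) w(1)])
  also have "(cnj x0 * x0 * kern a a (ff a) (ff a) + cnj x0 * x1 * kern a z (ff a) (ff z) + cnj x0 * x2 * kern a w (ff a) (ff w)
    + (cnj x1 * x0 * kern z a (ff z) (ff a) + cnj x1 * x1 * kern z z (ff z) (ff z) + cnj x1 * x2 * kern z w (ff z) (ff w))
    + (cnj x2 * x0 * kern w a (ff w) (ff a) + cnj x2 * x1 * kern w z (ff w) (ff z) + cnj x2 * x2 * kern w w (ff w) (ff w)))
    = nb * (cnj y1*y1*kern z z (X z/A z) (X z/A z) + cnj y1*y2*kern z w (X z/A z) (X w/A w)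
       + cnj y2*y1*kern w z (X w/A w) (X z/A z) + cnj y2*y2*kern w w (X w/A w) (X w/A w))"
  proof (rule assemble)
    show "cnj x1 * x1 * kern z z (ff z) (ff z) = nb * (cnj y1 * y1 * kern z z (X z / A z) (X z / A z)) + nb * na * (cnj m1 * m1)"
      unfolding x1_def m1_def y1 by (rule tid[OF E[OF z(1) z(1) z(2) z(2)] benz[OF z(1)] benz[OF z(1)] alnz[OF z(1)] alnz[OF z(1)]])
    show "cnj x1 * x2 * kern z w (ff z) (ff w) = nb * (cnj y1 * y2 * kern z w (X z / A z) (X w / A w)) + nb * na * (cnj m1 * m2)"
      unfolding x1_def x2_def m1_def m2_def y1 y2 by (rule tid[OF E[OF z(1) w(1) z(2) w(2)] benz[OF z(1)] benz[OF w(1)] alnz[OF z(1)] alnz[OF w(1)]])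
    show "cnj x2 * x1 * kern w z (ff w) (ff z) = nb * (cnj y2 * y1 * kern w z (X w / A w) (X z / A z)) + nb * na * (cnj m2 * m1)"
      unfolding x1_def x2_def m1_def m2_def y1 y2 by (rule tid[OF E[OF w(1) z(1) w(2) z(2)] benz[OF w(1)] benz[OF z(1)] alnz[OF w(1)] alnz[OF z(1)]])
    show "cnj x2 * x2 * kern w w (ff w) (ff w) = nb * (cnj y2 * y2 * kern w w (X w / A w) (X w / A w)) + nb * na * (cnj m2 * m2)"
      unfolding x2_def m2_def y2 by (rule tid[OF E[OF w(1) w(1) w(2) w(2)] benz[OF w(1)] benz[OF w(1)] alnz[OF w(1)] alnz[OF w(1)]])
    have k0s: "kern a s (ff a) (ff s) = cnj (be s) / cnj (al s)" for s
      by (simp add: kern_def be_def al_def bb_def mult.commute)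
    have ks0: "kern s a (ff s) (ff a) = be s / al s" for s
      by (simp add: kern_def be_def al_def bb_def mult.commute)
    have cbz: "cnj (be z) \<noteq> 0" "cnj (be w) \<noteq> 0" using benz[OF z(1)] benz[OF w(1)] by auto
    show "x1 * kern a z (ff a) (ff z) = nb * m1"
      unfolding x1_def m1_def k0s using cbz by (simp add: field_simps)
    show "x2 * kern a w (ff a) (ff w) = nb * m2"
      unfolding x2_def m2_def k0s using cbz by (simp add: field_simps)
    show "cnj x1 * kern z a (ff z) (ff a) = nb * cnj m1"
      unfolding x1_def m1_def ks0 using benz[OF z(1)] nbr by (simp add: field_simps)
    show "cnj x2 * kern w a (ff w) (ff a) = nb * cnj m2"
      unfolding x2_def m2_def ks0 using benz[OF w(1)] nbr by (simp add: field_simps)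
    show "kern a a (ff a) (ff a) * na = nb"
      unfolding kern_def using nanz by (simp add: na_def nb_def bb_def)
    show "x0 = - (na * (m1 + m2))" by (simp add: x0_def)
    show "cnj na = na" by (rule nar)
  qed
  finally have "0 \<le> Re (nb * (cnj y1*y1*kern z z (X z/A z) (X z/A z) + cnj y1*y2*kern z w (X z/A z) (X w/A w)
       + cnj y2*y1*kern w z (X w/A w) (X z/A z) + cnj y2*y2*kern w w (X w/A w) (X w/A w)))" .
  moreover have "nb = of_real (1 - (cmod bb)\<^sup>2)" unfolding nb_def mult_cnj_real by simp
  moreover have "1 - (cmod bb)\<^sup>2 > 0" using bb1 by (simp add: abs_square_less_1)
  ultimately show ?thesis unfolding g by (simp add: zero_le_mult_iff)
qed

lemma pickC_deriv:
  assumes pc: "pickC ff" and a: "cmod a < 1" and b: "cmod (ff a) < 1"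
  shows "ff field_differentiable (at a)"
proof -
  define r where "r = (1 - cmod a)/2"
  define U where "U = ball a r - {a}"
  define g where "g = mobg ff a"
  define bb where "bb = ff a"
  define al where "al s = 1 - cnj a * s" for s
  define be where "be s = 1 - cnj bb * ff s" for s
  have r0: "r > 0" using a by (simp add: r_def)
  have fb: "cmod (ff s) \<le> 1" if "cmod s < 1" for s using pickC_bound[OF pc that] .
  have bb1: "cmod bb < 1" using b by (simp add: bb_def)
  have inball: "cmod s < 1 - r" if "s \<in> ball a r" for s
  proof -
    have "cmod s \<le> cmod a + cmod (s - a)" by (metis add.commute diff_add_cancel norm_triangle_ineq)
    also have "cmod (s - a) < r" using that by (simp add: dist_norm norm_minus_commute)
    finally show ?thesis by (simp add: r_def field_simps)
  qed
  have inb1: "cmod s < 1" if "s \<in> ball a r" for s using inball[OF that] r0 by simp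
  have aln: "cmod (al s) \<ge> r" if "s \<in> ball a r" for s
  proof -
    have "cmod (cnj a * s) \<le> cmod s" using a by (simp add: norm_mult mult_left_le_one_le)
    then have "1 - cmod s \<le> cmod (al s)" unfolding al_def
      by (metis norm_one norm_triangle_ineq2 order_trans diff_left_mono)
    then show ?thesis using inball[OF that] by simp
  qed
  have alnz: "al s \<noteq> 0" if "s \<in> ball a r" for s using aln[OF that] r0 by auto
  have benz: "be s \<noteq> 0" if "s \<in> ball a r" for s unfolding be_def using one_minus_nz[OF bb1 fb[OF inb1[OF that]]] .
  have lip: "cmod (g s - g t) * r \<le> 2 * cmod (s - t)" and gb: "cmod (g s) \<le> 1" if "s \<in> U" "t \<in> U" for s t
  proof -
    have s: "cmod s < 1" "s \<noteq> a" and t: "cmod t < 1" "t \<noteq> a" using that inb1 by (auto simp: U_def)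
    note sp = sp2[OF s(1) t(1) schur_step[OF pc a b s t]]
    show "cmod (g s) \<le> 1" using sp(1) by (simp add: g_def)
    have "cmod (cnj t) \<le> 1" using t by simp
    then have "cmod (s * cnj t) \<le> cmod s" by (simp add: norm_mult mult_left_le)
    then have "1 - cmod s \<le> cmod (1 - s * cnj t)"
      by (metis norm_one norm_triangle_ineq2 order_trans diff_left_mono)
    moreover have "r \<le> 1 - cmod s" using inball[of s] that by (auto simp: U_def)
    ultimately have "r \<le> cmod (1 - s * cnj t)" by simp
    then have "cmod (g s - g t) * r \<le> cmod (g s - g t) * cmod (1 - s * cnj t)" by (simp add: mult_left_mono)
    also have "\<dots> \<le> 2 * cmod (s - t)" using sp(3) by (simp add: g_def)
    finally show "cmod (g s - g t) * r \<le> 2 * cmod (s - t)" .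
  qed
  have uc: "uniformly_continuous_on U g"
    unfolding uniformly_continuous_on_def
  proof (intro allI impI)
    fix e :: real assume e: "e > 0"
    show "\<exists>d>0. \<forall>x\<in>U. \<forall>x'\<in>U. dist x' x < d \<longrightarrow> dist (g x') (g x) < e"
    proof (intro exI[of _ "e * r / 2"] conjI ballI impI)
      show "e * r / 2 > 0" using e r0 by simp
      fix x x' assume xx: "x \<in> U" "x' \<in> U" "dist x' x < e * r / 2"
      have "cmod (g x' - g x) * r \<le> 2 * cmod (x' - x)" by (rule lip[OF xx(2,1)])
      also have "\<dots> < e * r" using xx(3) by (simp add: dist_norm)
      finally show "dist (g x') (g x) < e" using r0 by (simp add: dist_norm)
    qed
  qed
  have "a islimpt ball a r" using r0 by (simp add: islimpt_ball)
  then have "a \<in> closure U" unfolding U_def using islimpt_in_closure by blast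
  then obtain l where l: "(g \<longlongrightarrow> l) (at a within U)"
    using uniformly_continuous_on_extension_at_closure[OF uc] by blast
  have "at a within U = at a" unfolding U_def
    by (metis at_within_def Diff_idemp at_within_open open_ball centre_in_ball r0)
  then have gl: "(g \<longlongrightarrow> l) (at a)" using l by simp
  have eq: "(ff s - ff a)/(s - a) = g s * be s / al s" if "s \<in> ball a r" "s \<noteq> a" for s
  proof -
    have "g s = ((ff s - ff a)/be s)/((s - a)/al s)" by (simp add: g_def mobg_def be_def al_def bb_def)
    then show ?thesis using alnz[OF that(1)] benz[OF that(1)] that(2) by (simp add: field_simps)
  qed
  have ffl: "(ff \<longlongrightarrow> ff a) (at a)"
  proof (rule LIM_zero_cancel, rule Lim_null_comparison)
    show "\<forall>\<^sub>F s in at a. cmod (ff s - ff a) \<le> 2 * cmod (s - a) / r"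
      unfolding eventually_at_topological
    proof (intro exI[of _ "ball a r"] conjI ballI impI allI)
      fix s assume s: "s \<in> ball a r" "s \<noteq> a"
      have sU: "s \<in> U" using s by (simp add: U_def)
      have "ff s - ff a = (s - a) * (g s * be s / al s)"
        using eq[OF s] s(2) by (simp add: field_simps)
      then have "cmod (ff s - ff a) = cmod (s - a) * cmod (g s) * cmod (be s) / cmod (al s)"
        by (simp add: norm_mult norm_divide)
      also have "\<dots> \<le> cmod (s - a) * 1 * 2 / r"
      proof (intro divide_mono mult_mono)
        show "cmod (g s) \<le> 1" using gb[OF sU sU] .
        show "cmod (be s) \<le> 2" unfolding be_def
          using norm_triangle_ineq4[of 1 "cnj bb * ff s"] bb1 fb[OF inb1[OF s(1)]]
          by (simp add: norm_mult) (smt (verit) mult_le_one norm_ge_zero)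
        show "r \<le> cmod (al s)" by (rule aln[OF s(1)])
      qed (use r0 in auto)
      finally show "cmod (ff s - ff a) \<le> 2 * cmod (s - a) / r" by (simp add: mult.commute)
    qed (use r0 in auto)
    show "((\<lambda>s. 2 * cmod (s - a) / r) \<longlongrightarrow> 0) (at a)"
    proof -
      have "((\<lambda>s. 2 * cmod (s - a) / r) \<longlongrightarrow> 2 * cmod (a - a) / r) (at a)"
        using r0 by (intro tendsto_intros) auto
      then show ?thesis by simp
    qed
  qed
  have "((\<lambda>s. g s * be s / al s) \<longlongrightarrow> l * (1 - cnj bb * ff a) / (1 - cnj a * a)) (at a)"
    unfolding be_def al_def
    using a one_minus_nz[OF a, of a]
    by (intro tendsto_intros gl ffl) auto
  then have "((\<lambda>s. (ff s - ff a)/(s - a)) \<longlongrightarrow> l * (1 - cnj bb * ff a) / (1 - cnj a * a)) (at a)"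
    by (rule Lim_transform_within_open[where s="ball a r"]) (use r0 eq in auto)
  then have "(ff has_field_derivative (l * (1 - cnj bb * ff a) / (1 - cnj a * a))) (at a)"
    by (simp add: has_field_derivative_iff)
  then show ?thesis unfolding field_differentiable_def by blast
qed

lemma pickC_holo:
  assumes pc: "pickC ff" shows "ff holomorphic_on ball 0 1"
proof (cases "\<exists>a0. cmod a0 < 1 \<and> cmod (ff a0) = 1")
  case True
  then obtain a0 where a0: "cmod a0 < 1" "cmod (ff a0) = 1" by blast
  have "(\<lambda>_. ff a0) holomorphic_on ball 0 1" by simp
  then show ?thesis
    by (rule holomorphic_transform) (use pickC_const[OF pc a0(1) _ a0(2)] in auto)
next
  case False
  show ?thesis unfolding holomorphic_on_def
  proof
    fix x assume x: "x \<in> ball (0::complex) 1"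
    then have x1: "cmod x < 1" by simp
    then have "cmod (ff x) < 1" using pickC_bound[OF pc x1] False by (auto simp: less_le)
    then have "ff field_differentiable (at x)" by (rule pickC_deriv[OF pc x1])
    then show "ff field_differentiable (at x within ball 0 1)" by (rule field_differentiable_at_within)
  qed
qed

lemma pickC_series:
  assumes pc: "pickC ff"
  shows "\<exists>c. (\<forall>k. cmod (c k) \<le> 1) \<and> (\<forall>z. cmod z < 1 \<longrightarrow> (\<lambda>k. c k * z^k) sums ff z)"
proof (intro exI conjI allI impI)
  have hol: "ff holomorphic_on ball 0 1" by (rule pickC_holo[OF pc])
  define c where "c k = (deriv ^^ k) ff 0 / fact k" for k
  fix z :: complex assume "cmod z < 1"
  then have "z \<in> ball 0 1" by simp
  from holomorphic_power_series[OF hol this] show "(\<lambda>k. c k * z^k) sums ff z" by (simp add: c_def)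
next
  fix k
  define c where "c k = (deriv ^^ k) ff 0 / fact k" for k
  have hol: "ff holomorphic_on ball 0 1" by (rule pickC_holo[OF pc])
  have bnd: "cmod (c k) * \<rho>^k \<le> 1" if "\<rho> \<in> {0<..<1}" for \<rho>
  proof -
    have r: "0 < \<rho>" "\<rho> < 1" using that by auto
    have h: "ff holomorphic_on ball 0 \<rho>" using hol by (rule holomorphic_on_subset) (use r in auto)
    have "ff holomorphic_on cball 0 \<rho>" using hol by (rule holomorphic_on_subset) (use r in auto)
    then have ct: "continuous_on (cball 0 \<rho>) ff" by (rule holomorphic_on_imp_continuous_on)
    have "cmod ((deriv ^^ k) ff 0) \<le> fact k * 1 / \<rho>^k"
    proof (rule Cauchy_inequality[OF h ct r(1)])
      fix x :: complex assume "cmod (0 - x) = \<rho>"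
      then have "cmod x < 1" using r by simp
      then show "cmod (ff x) \<le> 1" by (rule pickC_bound[OF pc])
    qed
    then show ?thesis using r by (simp add: c_def norm_divide field_simps)
  qed
  have "((\<lambda>\<rho>. cmod (c k) * \<rho>^k) \<longlongrightarrow> cmod (c k) * 1^k) (at_left (1::real))"
    by (intro tendsto_intros)
  then have "cmod (c k) * 1^k \<le> 1"
    by (rule tendsto_upperbound) (use eventually_at_left_real[of 0 "1::real"] bnd in \<open>auto elim: eventually_mono\<close>)
  then show "cmod ((deriv ^^ k) ff 0 / fact k) \<le> 1" by (simp add: c_def)
qed



lemma qcnj_mult: "qcnj (a * b) = qcnj b * qcnj a"
  by (simp add: quat_eq_iff algebra_simps)
lemma qcnj_add: "qcnj (a + b) = qcnj a + qcnj b"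
  by (simp add: quat_eq_iff)
lemma qcnj_diff: "qcnj (a - b) = qcnj a - qcnj b"
  by (simp add: quat_eq_iff)
lemma qcnj_one[simp]: "qcnj 1 = 1"
  by (simp add: quat_eq_iff)
lemma qcnj_zero[simp]: "qcnj 0 = 0"
  by (simp add: quat_eq_iff)
lemma qcnj_qcnj[simp]: "qcnj (qcnj a) = a"
  by (simp add: quat_eq_iff)
lemma qcnj_power: "qcnj (a ^ k) = qcnj a ^ k"
  by (induction k) (simp_all add: qcnj_mult power_commutes)
lemma qcnj_sum: "qcnj (sum g A) = sum (\<lambda>i. qcnj (g i)) A"
  by (induction A rule: infinite_finite_induct) (simp_all add: qcnj_add)
lemma norm_qcnj[simp]: "norm (qcnj a) = norm a"
  by (simp add: norm_quat_def qnormsq_def)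
lemma qnormsq_norm: "qnormsq a = (norm a)\<^sup>2"
  by (simp add: norm_quat_def qnormsq_def add_nonneg_nonneg)
lemma qnormsq_zero[simp]: "qnormsq 0 = 0"
  by (simp add: qnormsq_def)
lemma qRe_mult_qcnj: "qRe (a * qcnj a) = qnormsq a"
  by (simp add: qnormsq_def power2_eq_square)

lemma bounded_linear_qRe: "bounded_linear qRe"
proof (rule bounded_linear_intro[where K=1])
  show "qRe (x + y) = qRe x + qRe y" for x y by simp
  show "qRe (scaleR r x) = r *\<^sub>R qRe x" for r x by simp
  show "norm (qRe x) \<le> norm x * 1" for x
  proof -
    have "sqrt ((qRe x)\<^sup>2) \<le> sqrt (qnormsq x)" unfolding qnormsq_def
      by (rule real_sqrt_le_mono) simp
    then have "\<bar>qRe x\<bar> \<le> sqrt (qnormsq x)" by simp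
    then show "norm (qRe x) \<le> norm x * 1" by (simp add: norm_quat_def)
  qed
qed

definition emb :: "complex \<Rightarrow> quat" where "emb c = Quat (Re c) (Im c) 0 0"
definition qa :: "quat \<Rightarrow> complex" where "qa q = Complex (qRe q) (qIm1 q)"
definition qb :: "quat \<Rightarrow> complex" where "qb q = Complex (qIm2 q) (qIm3 q)"
definition jq :: quat where "jq = Quat 0 0 1 0"

lemma emb_simps[simp]: "qRe (emb c) = Re c" "qIm1 (emb c) = Im c" "qIm2 (emb c) = 0" "qIm3 (emb c) = 0"
  by (simp_all add: emb_def)
lemma emb_mult: "emb (a * b) = emb a * emb b" by (simp add: quat_eq_iff)
lemma emb_add: "emb (a + b) = emb a + emb b" by (simp add: quat_eq_iff)
lemma emb_one[simp]: "emb 1 = 1" by (simp add: quat_eq_iff)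
lemma emb_zero[simp]: "emb 0 = 0" by (simp add: quat_eq_iff)
lemma emb_cnj: "emb (cnj a) = qcnj (emb a)" by (simp add: quat_eq_iff)
lemma emb_power: "emb (a ^ k) = emb a ^ k" by (induction k) (simp_all add: emb_mult)
lemma emb_sum: "emb (sum g A) = sum (\<lambda>i. emb (g i)) A"
  by (induction A rule: infinite_finite_induct) (simp_all add: emb_add)
lemma emb_commute: "emb a * emb b = emb b * emb a" by (simp add: quat_eq_iff algebra_simps)
lemma norm_emb[simp]: "norm (emb a) = cmod a"
  by (simp add: norm_quat_def qnormsq_def cmod_def)
lemma bounded_linear_emb: "bounded_linear emb"
proof
  show "emb (x + y) = emb x + emb y" for x y by (rule emb_add)
  show "emb (scaleR r x) = scaleR r (emb x)" for r x by (simp add: quat_eq_iff)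
  show "\<exists>K. \<forall>x. norm (emb x) \<le> norm x * K" by (intro exI[of _ 1]) simp
qed

lemma qa_emb_mult: "qa (emb c * q) = c * qa q" by (simp add: qa_def complex_eq_iff)
lemma qb_emb_mult: "qb (emb c * q) = c * qb q" by (simp add: qb_def complex_eq_iff)
lemma qa_add: "qa (x + y) = qa x + qa y" by (simp add: qa_def complex_eq_iff)
lemma qb_add: "qb (x + y) = qb x + qb y" by (simp add: qb_def complex_eq_iff)
lemma qa_zero[simp]: "qa 0 = 0" by (simp add: qa_def complex_eq_iff)
lemma qb_zero[simp]: "qb 0 = 0" by (simp add: qb_def complex_eq_iff)
lemma qa_sum: "qa (sum g A) = sum (\<lambda>i. qa (g i)) A"
  by (induction A rule: infinite_finite_induct) (simp_all add: qa_add)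
lemma qb_sum: "qb (sum g A) = sum (\<lambda>i. qb (g i)) A"
  by (induction A rule: infinite_finite_induct) (simp_all add: qb_add)
lemma qnormsq_ab: "qnormsq q = (cmod (qa q))\<^sup>2 + (cmod (qb q))\<^sup>2"
  by (simp add: qnormsq_def qa_def qb_def cmod_power2)
lemma q_decomp: "q = emb (qa q) + emb (qb q) * jq"
  by (simp add: quat_eq_iff qa_def qb_def jq_def)

lemma pick_entry_summable:
  fixes zs zt c :: quat
  assumes "norm zs < 1" "norm zt < 1"
  shows "summable (\<lambda>k. zs^k * c * qcnj zt ^ k)"
proof (rule summable_comparison_test)
  have r: "norm zs * norm zt < 1"
    using assms by (metis mult_le_one norm_ge_zero less_eq_real_def linorder_not_less mult_less_cancel_left1 order_le_less_trans)
  show "summable (\<lambda>k. norm c * (norm zs * norm zt) ^ k)"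
    by (rule summable_mult) (rule summable_geometric, simp add: r)
  show "\<exists>N. \<forall>n\<ge>N. norm (zs ^ n * c * qcnj zt ^ n) \<le> norm c * (norm zs * norm zt) ^ n"
    by (intro exI[of _ 0] allI impI) (simp add: norm_mult norm_power power_mult_distrib)
qed

lemma pick_form:
  fixes Z X :: "nat \<Rightarrow> quat" and f :: "quat \<Rightarrow> quat"
  assumes Z: "\<forall>s<3. norm (Z s) < 1"
  shows "(\<lambda>k. qnormsq (\<Sum>s<3. qcnj (X s) * Z s ^ k) - qnormsq (\<Sum>s<3. qcnj (X s) * Z s ^ k * f (Z s)))
     sums qRe (\<Sum>s<3. \<Sum>t<3. qcnj (X s) * pick_matrix f Z s t * X t)"
proof -
  define T where "T s t k = qcnj (X s) * (Z s ^ k * (1 - f (Z s) * qcnj (f (Z t))) * qcnj (Z t) ^ k) * X t" for s t k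
  have each: "(T s t) sums (qcnj (X s) * pick_matrix f Z s t * X t)" if "s < 3" "t < 3" for s t
  proof -
    have "summable (\<lambda>k. Z s ^ k * (1 - f (Z s) * qcnj (f (Z t))) * qcnj (Z t) ^ k)"
      by (rule pick_entry_summable) (use Z that in auto)
    then have "(\<lambda>k. Z s ^ k * (1 - f (Z s) * qcnj (f (Z t))) * qcnj (Z t) ^ k) sums pick_matrix f Z s t"
      unfolding pick_matrix_def by (rule summable_sums)
    then show ?thesis unfolding T_def by (intro sums_mult sums_mult2)
  qed
  have "(\<lambda>k. \<Sum>s<3. \<Sum>t<3. T s t k) sums (\<Sum>s<3. \<Sum>t<3. qcnj (X s) * pick_matrix f Z s t * X t)"
    by (intro sums_sum each) auto
  from bounded_linear.sums[OF bounded_linear_qRe this]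
  have S: "(\<lambda>k. qRe (\<Sum>s<3. \<Sum>t<3. T s t k)) sums qRe (\<Sum>s<3. \<Sum>t<3. qcnj (X s) * pick_matrix f Z s t * X t)" .
  have "qRe (\<Sum>s<3. \<Sum>t<3. T s t k) = qnormsq (\<Sum>s<3. qcnj (X s) * Z s ^ k) - qnormsq (\<Sum>s<3. qcnj (X s) * Z s ^ k * f (Z s))" for k
  proof -
    define W where "W = (\<Sum>s<3. qcnj (X s) * Z s ^ k)"
    define V where "V = (\<Sum>s<3. qcnj (X s) * Z s ^ k * f (Z s))"
    have cW: "qcnj W = (\<Sum>t<3. qcnj (Z t) ^ k * X t)"
      by (simp add: W_def qcnj_sum qcnj_mult qcnj_power)
    have cV: "qcnj V = (\<Sum>t<3. qcnj (f (Z t)) * qcnj (Z t) ^ k * X t)"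
      by (simp add: V_def qcnj_sum qcnj_mult qcnj_power mult.assoc)
    have "(\<Sum>s<3. \<Sum>t<3. T s t k) = W * qcnj W - V * qcnj V"
      unfolding cW cV unfolding W_def V_def sum_product sum_subtractf[symmetric]
      by (intro sum.cong refl) (simp add: T_def algebra_simps)
    then show ?thesis by (simp del: quat_mult_simps add: W_def V_def qRe_mult_qcnj)
  qed
  then show ?thesis using S by simp
qed

lemma cpick_form:
  fixes p x :: "nat \<Rightarrow> complex" and \<phi> :: "complex \<Rightarrow> complex"
  assumes P: "\<forall>s<3. cmod (p s) < 1"
  shows "(\<lambda>k. (cmod (\<Sum>s<3. cnj (x s) * p s ^ k))\<^sup>2 - (cmod (\<Sum>s<3. cnj (x s) * p s ^ k * \<phi> (p s)))\<^sup>2)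
     sums Re (\<Sum>s<3. \<Sum>t<3. cnj (x s) * x t * kern (p s) (p t) (\<phi> (p s)) (\<phi> (p t)))"
proof -
  define T where "T s t k = cnj (x s) * x t * (1 - \<phi> (p s) * cnj (\<phi> (p t))) * (p s * cnj (p t)) ^ k" for s t k
  have each: "(T s t) sums (cnj (x s) * x t * kern (p s) (p t) (\<phi> (p s)) (\<phi> (p t)))" if "s < 3" "t < 3" for s t
  proof -
    have "cmod (p s * cnj (p t)) < 1" using P that
      by (simp add: norm_mult) (metis mult_le_one norm_ge_zero less_eq_real_def linorder_not_less mult_less_cancel_left1 order_le_less_trans)
    from geometric_sums[OF this]
    have "(\<lambda>k. (cnj (x s) * x t * (1 - \<phi> (p s) * cnj (\<phi> (p t)))) * (p s * cnj (p t)) ^ k) sums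
       ((cnj (x s) * x t * (1 - \<phi> (p s) * cnj (\<phi> (p t)))) * (1 / (1 - p s * cnj (p t))))"
      by (rule sums_mult)
    then show ?thesis unfolding T_def kern_def by simp
  qed
  have "(\<lambda>k. \<Sum>s<3. \<Sum>t<3. T s t k) sums (\<Sum>s<3. \<Sum>t<3. cnj (x s) * x t * kern (p s) (p t) (\<phi> (p s)) (\<phi> (p t)))"
    by (intro sums_sum each) auto
  from sums_Re[OF this]
  have S: "(\<lambda>k. Re (\<Sum>s<3. \<Sum>t<3. T s t k)) sums Re (\<Sum>s<3. \<Sum>t<3. cnj (x s) * x t * kern (p s) (p t) (\<phi> (p s)) (\<phi> (p t)))" .
  have "Re (\<Sum>s<3. \<Sum>t<3. T s t k) = (cmod (\<Sum>s<3. cnj (x s) * p s ^ k))\<^sup>2 - (cmod (\<Sum>s<3. cnj (x s) * p s ^ k * \<phi> (p s)))\<^sup>2" for k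
  proof -
    define W where "W = (\<Sum>s<3. cnj (x s) * p s ^ k)"
    define V where "V = (\<Sum>s<3. cnj (x s) * p s ^ k * \<phi> (p s))"
    have cW: "cnj W = (\<Sum>t<3. x t * cnj (p t) ^ k)" by (simp add: W_def)
    have cV: "cnj V = (\<Sum>t<3. x t * cnj (p t) ^ k * cnj (\<phi> (p t)))" by (simp add: V_def)
    have "(\<Sum>s<3. \<Sum>t<3. T s t k) = W * cnj W - V * cnj V"
      unfolding cW cV unfolding W_def V_def sum_product sum_subtractf[symmetric]
      by (intro sum.cong refl) (simp add: T_def algebra_simps power_mult_distrib)
    then have "Re (\<Sum>s<3. \<Sum>t<3. T s t k) = Re (W * cnj W - V * cnj V)" by simp
    also have "\<dots> = (cmod W)\<^sup>2 - (cmod V)\<^sup>2" by (simp only: mult_cnj_real) simp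
    finally show ?thesis unfolding W_def V_def .
  qed
  then show ?thesis using S by simp
qed

lemma form_nonneg:
  assumes H: "\<forall>z :: nat \<Rightarrow> quat. (\<forall>i<3. z i \<in> qball) \<longrightarrow> quat_psd 3 (pick_matrix f z)"
    and Z: "\<forall>s<3. norm (Z s) < 1"
  shows "0 \<le> qRe (\<Sum>s<3. \<Sum>t<3. qcnj (X s) * pick_matrix f Z s t * X t)"
  using H Z unfolding quat_psd_def quat_nonneg_def qball_def by blast

lemma f_bound:
  assumes H: "\<forall>z :: nat \<Rightarrow> quat. (\<forall>i<3. z i \<in> qball) \<longrightarrow> quat_psd 3 (pick_matrix f z)"
    and z: "norm z < 1"
  shows "norm (f z) \<le> 1"
proof -
  define Z where "Z = (\<lambda>_::nat. z)"
  define X where "X = (\<lambda>s::nat. if s = 0 then (1::quat) else 0)"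
  have Zb: "\<forall>s<3. norm (Z s) < 1" using z by (simp add: Z_def)
  have S: "(\<lambda>k. qnormsq (\<Sum>s<3. qcnj (X s) * Z s ^ k) - qnormsq (\<Sum>s<3. qcnj (X s) * Z s ^ k * f (Z s)))
     sums qRe (\<Sum>s<3. \<Sum>t<3. qcnj (X s) * pick_matrix f Z s t * X t)" by (rule pick_form[OF Zb])
  have "qnormsq (\<Sum>s<3. qcnj (X s) * Z s ^ k) - qnormsq (\<Sum>s<3. qcnj (X s) * Z s ^ k * f (Z s))
      = (1 - (norm (f z))\<^sup>2) * ((norm z)\<^sup>2) ^ k" for k
    by (simp add: sum3 X_def Z_def qnormsq_norm norm_mult norm_power power_mult_distrib algebra_simps power_mult[symmetric] mult.commute[of 2])
  moreover have "(\<lambda>k. (1 - (norm (f z))\<^sup>2) * ((norm z)\<^sup>2) ^ k) sums ((1 - (norm (f z))\<^sup>2) * (1 / (1 - (norm z)\<^sup>2)))"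
    by (rule sums_mult, rule geometric_sums) (use z in \<open>simp add: abs_square_less_1\<close>)
  ultimately have "qRe (\<Sum>s<3. \<Sum>t<3. qcnj (X s) * pick_matrix f Z s t * X t) = (1 - (norm (f z))\<^sup>2) * (1 / (1 - (norm z)\<^sup>2))"
    using S sums_unique2 by simp
  moreover have "0 \<le> qRe (\<Sum>s<3. \<Sum>t<3. qcnj (X s) * pick_matrix f Z s t * X t)"
    by (rule form_nonneg[OF H Zb])
  moreover have "1 - (norm z)\<^sup>2 > 0" using z by (simp add: abs_square_less_1)
  ultimately have "0 \<le> 1 - (norm (f z))\<^sup>2" by (simp add: zero_le_divide_iff)
  then show ?thesis by (simp add: abs_square_le_1)
qed

lemma slice_pick:
  assumes H: "\<forall>z :: nat \<Rightarrow> quat. (\<forall>i<3. z i \<in> qball) \<longrightarrow> quat_psd 3 (pick_matrix f z)"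
    and PE: "\<And>c q. P (emb c * q) = c * P q" and PS: "\<And>g (A::nat set). P (sum g A) = sum (\<lambda>i. P (g i)) A"
    and PB: "\<And>q. (cmod (P q))\<^sup>2 \<le> qnormsq q"
  shows "pickC (\<lambda>\<zeta>. P (f (emb \<zeta>)))"
  unfolding pickC_def
proof (intro allI impI)
  fix p x :: "nat \<Rightarrow> complex"
  assume ps: "\<forall>s<(3::nat). cmod (p s) < 1"
  define \<phi> where "\<phi> = (\<lambda>\<zeta>. P (f (emb \<zeta>)))"
  define Z where "Z = (\<lambda>s. emb (p s))"
  define X where "X = (\<lambda>s. emb (x s))"
  have Zb: "\<forall>s<3. norm (Z s) < 1" using ps by (simp add: Z_def)
  note QS = pick_form[OF Zb, of X f]
  note CS = cpick_form[OF ps, of x \<phi>]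
  have le: "qnormsq (\<Sum>s<3. qcnj (X s) * Z s ^ k) - qnormsq (\<Sum>s<3. qcnj (X s) * Z s ^ k * f (Z s))
      \<le> (cmod (\<Sum>s<3. cnj (x s) * p s ^ k))\<^sup>2 - (cmod (\<Sum>s<3. cnj (x s) * p s ^ k * \<phi> (p s)))\<^sup>2" for k
  proof -
    have W: "(\<Sum>s<3. qcnj (X s) * Z s ^ k) = emb (\<Sum>s<3. cnj (x s) * p s ^ k)"
      by (simp add: X_def Z_def emb_sum emb_mult emb_cnj emb_power)
    have V: "(\<Sum>s<3. qcnj (X s) * Z s ^ k * f (Z s)) = (\<Sum>s<3. emb (cnj (x s) * p s ^ k) * f (Z s))"
      by (simp add: X_def Z_def emb_mult emb_cnj emb_power)
    have "P (\<Sum>s<3. emb (cnj (x s) * p s ^ k) * f (Z s)) = (\<Sum>s<3. cnj (x s) * p s ^ k * \<phi> (p s))"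
      unfolding PS PE \<phi>_def Z_def by (rule refl)
    then have "(cmod (\<Sum>s<3. cnj (x s) * p s ^ k * \<phi> (p s)))\<^sup>2 \<le> qnormsq (\<Sum>s<3. qcnj (X s) * Z s ^ k * f (Z s))"
      unfolding V using PB by metis
    then show ?thesis unfolding W by (simp add: qnormsq_norm)
  qed
  have "qRe (\<Sum>s<3. \<Sum>t<3. qcnj (X s) * pick_matrix f Z s t * X t)
     \<le> Re (\<Sum>s<3. \<Sum>t<3. cnj (x s) * x t * kern (p s) (p t) (\<phi> (p s)) (\<phi> (p t)))"
    by (rule sums_le[OF le QS CS])
  moreover have "0 \<le> qRe (\<Sum>s<3. \<Sum>t<3. qcnj (X s) * pick_matrix f Z s t * X t)"
    by (rule form_nonneg[OF H Zb])
  ultimately show "0 \<le> Re (\<Sum>s<3. \<Sum>t<3. cnj (x s) * x t * kern (p s) (p t) (P (f (emb (p s)))) (P (f (emb (p t)))))"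
    by (simp add: \<phi>_def)
qed

lemma pickC_qa:
  assumes H: "\<forall>z :: nat \<Rightarrow> quat. (\<forall>i<3. z i \<in> qball) \<longrightarrow> quat_psd 3 (pick_matrix f z)"
  shows "pickC (\<lambda>\<zeta>. qa (f (emb \<zeta>)))"
  by (rule slice_pick[OF H qa_emb_mult qa_sum]) (simp add: qnormsq_ab)

lemma pickC_qb:
  assumes H: "\<forall>z :: nat \<Rightarrow> quat. (\<forall>i<3. z i \<in> qball) \<longrightarrow> quat_psd 3 (pick_matrix f z)"
  shows "pickC (\<lambda>\<zeta>. qb (f (emb \<zeta>)))"
  by (rule slice_pick[OF H qb_emb_mult qb_sum]) (simp add: qnormsq_ab)

lemma norm_jq[simp]: "norm jq = 1"
  by (simp add: norm_quat_def qnormsq_def jq_def)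

lemma slice_series:
  assumes H: "\<forall>z :: nat \<Rightarrow> quat. (\<forall>i<3. z i \<in> qball) \<longrightarrow> quat_psd 3 (pick_matrix f z)"
  obtains c where "\<forall>k. norm (c k) \<le> 2" "\<forall>\<zeta>. cmod \<zeta> < 1 \<longrightarrow> (\<lambda>k. emb \<zeta> ^ k * c k) sums f (emb \<zeta>)"
proof -
  obtain ca where ca: "\<forall>k. cmod (ca k) \<le> 1" "\<forall>z. cmod z < 1 \<longrightarrow> (\<lambda>k. ca k * z^k) sums qa (f (emb z))"
    using pickC_series[OF pickC_qa[OF H]] by blast
  obtain cb where cb: "\<forall>k. cmod (cb k) \<le> 1" "\<forall>z. cmod z < 1 \<longrightarrow> (\<lambda>k. cb k * z^k) sums qb (f (emb z))"
    using pickC_series[OF pickC_qb[OF H]] by blast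
  define c where "c k = emb (ca k) + emb (cb k) * jq" for k
  show ?thesis
  proof
    show "\<forall>k. norm (c k) \<le> 2"
    proof
      fix k
      have "norm (c k) \<le> norm (emb (ca k)) + norm (emb (cb k) * jq)" unfolding c_def by (rule norm_triangle_ineq)
      also have "\<dots> = cmod (ca k) + cmod (cb k)" by (simp add: norm_mult)
      also have "\<dots> \<le> 2" using ca(1) cb(1) by (smt (verit))
      finally show "norm (c k) \<le> 2" .
    qed
    show "\<forall>\<zeta>. cmod \<zeta> < 1 \<longrightarrow> (\<lambda>k. emb \<zeta> ^ k * c k) sums f (emb \<zeta>)"
    proof (intro allI impI)
      fix \<zeta> :: complex assume z: "cmod \<zeta> < 1"
      have e: "emb \<zeta> ^ k * c k = emb (ca k * \<zeta>^k) + emb (cb k * \<zeta>^k) * jq" for k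
      proof -
        have "emb \<zeta> ^ k * c k = emb (\<zeta>^k) * emb (ca k) + (emb (\<zeta>^k) * emb (cb k)) * jq"
          by (simp add: c_def emb_power distrib_left mult.assoc)
        then show ?thesis by (simp add: emb_mult[symmetric] mult.commute)
      qed
      have "(\<lambda>k. emb (ca k * \<zeta>^k) + emb (cb k * \<zeta>^k) * jq) sums (emb (qa (f (emb \<zeta>))) + emb (qb (f (emb \<zeta>))) * jq)"
        by (intro sums_add sums_mult2 bounded_linear.sums[OF bounded_linear_emb]) (use ca(2) cb(2) z in auto)
      then show "(\<lambda>k. emb \<zeta> ^ k * c k) sums f (emb \<zeta>)"
        unfolding e by (subst q_decomp[of "f (emb \<zeta>)"])
    qed
  qed
qed

lemma pow_slice:
  fixes I :: quat
  assumes I: "I * I = -1"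
  shows "(x *\<^sub>R 1 + y *\<^sub>R I) ^ k = Re (Complex x y ^ k) *\<^sub>R 1 + Im (Complex x y ^ k) *\<^sub>R I"
proof (induction k)
  case 0
  then show ?case by simp
next
  case (Suc k)
  define A where "A = Re (Complex x y ^ k)"
  define B where "B = Im (Complex x y ^ k)"
  have "(x *\<^sub>R 1 + y *\<^sub>R I) ^ Suc k = (x *\<^sub>R 1 + y *\<^sub>R I) * (A *\<^sub>R 1 + B *\<^sub>R I)"
    using Suc by (simp add: A_def B_def)
  also have "\<dots> = (x*A) *\<^sub>R 1 + (x*B) *\<^sub>R I + (y*A) *\<^sub>R I + (y*B) *\<^sub>R (I * I)"
    by (simp add: algebra_simps)
  also have "\<dots> = (x*A - y*B) *\<^sub>R 1 + (x*B + y*A) *\<^sub>R I"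
    unfolding I by (simp add: algebra_simps)
  also have "x*A - y*B = Re (Complex x y ^ Suc k)" by (simp add: A_def B_def)
  also have "x*B + y*A = Im (Complex x y ^ Suc k)" by (simp add: A_def B_def)
  finally show ?case .
qed

lemma emb_Complex: "emb (Complex A B) = A *\<^sub>R 1 + B *\<^sub>R Quat 0 1 0 0"
  by (simp add: quat_eq_iff)

lemma rel_ident:
  fixes I :: quat and A B :: real
  defines "iq \<equiv> Quat 0 1 0 0"
  shows "(- (1/2)) *\<^sub>R (1 - I * iq) * (A *\<^sub>R 1 + B *\<^sub>R iq) + (- (1/2)) *\<^sub>R (1 + I * iq) * (A *\<^sub>R 1 - B *\<^sub>R iq)
     + (A *\<^sub>R 1 + B *\<^sub>R I) = 0"
  unfolding iq_def by (simp add: quat_eq_iff algebra_simps)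

lemma quat_decomp:
  fixes z :: quat
  defines "y \<equiv> sqrt ((qIm1 z)\<^sup>2 + (qIm2 z)\<^sup>2 + (qIm3 z)\<^sup>2)"
  defines "I \<equiv> (if y = 0 then Quat 0 1 0 0 else Quat 0 (qIm1 z / y) (qIm2 z / y) (qIm3 z / y))"
  shows "z = qRe z *\<^sub>R 1 + y *\<^sub>R I" "I * I = -1" "cmod (Complex (qRe z) y) = norm z"
proof -
  have y2: "y\<^sup>2 = (qIm1 z)\<^sup>2 + (qIm2 z)\<^sup>2 + (qIm3 z)\<^sup>2" unfolding y_def by (simp add: add_nonneg_nonneg)
  show "z = qRe z *\<^sub>R 1 + y *\<^sub>R I"
  proof (cases "y = 0")
    case True
    then have "(qIm1 z)\<^sup>2 + (qIm2 z)\<^sup>2 + (qIm3 z)\<^sup>2 = 0" using y2 by simp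
    then have "qIm1 z = 0" "qIm2 z = 0" "qIm3 z = 0" by (simp_all add: add_nonneg_eq_0_iff add_nonneg_nonneg)
    then show ?thesis using True by (simp add: quat_eq_iff I_def)
  next
    case False
    then show ?thesis by (simp add: quat_eq_iff I_def)
  qed
  show "I * I = -1"
  proof (cases "y = 0")
    case True then show ?thesis by (simp add: quat_eq_iff I_def)
  next
    case False
    have "((qIm1 z)\<^sup>2 + (qIm2 z)\<^sup>2 + (qIm3 z)\<^sup>2) / y\<^sup>2 = 1" unfolding y2[symmetric] using False by simp
    then show ?thesis using False by (simp add: quat_eq_iff I_def power2_eq_square add_divide_distrib algebra_simps)
  qed
  show "cmod (Complex (qRe z) y) = norm z"
    by (simp add: cmod_def norm_quat_def qnormsq_def y2 add.assoc)
qed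

lemma rep_formula:
  assumes H: "\<forall>z :: nat \<Rightarrow> quat. (\<forall>i<3. z i \<in> qball) \<longrightarrow> quat_psd 3 (pick_matrix f z)"
    and z: "norm z < 1"
  obtains \<zeta> u0 u1 where "cmod \<zeta> = norm z"
    "\<And>k. z^k = -(u0 * emb \<zeta> ^ k + u1 * emb (cnj \<zeta>) ^ k)"
    "f z = -(u0 * f (emb \<zeta>) + u1 * f (emb (cnj \<zeta>)))"
proof -
  define y where "y = sqrt ((qIm1 z)\<^sup>2 + (qIm2 z)\<^sup>2 + (qIm3 z)\<^sup>2)"
  define I where "I = (if y = 0 then Quat 0 1 0 0 else Quat 0 (qIm1 z / y) (qIm2 z / y) (qIm3 z / y))"
  note D = quat_decomp[of z, folded y_def, folded I_def]
  define \<zeta> where "\<zeta> = Complex (qRe z) y"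
  define iq where "iq = Quat 0 1 0 0"
  define u0 where "u0 = (- (1/2)) *\<^sub>R (1 - I * iq)"
  define u1 where "u1 = (- (1/2)) *\<^sub>R (1 + I * iq)"
  have nz: "cmod \<zeta> = norm z" using D(3) by (simp add: \<zeta>_def)
  have pw: "z^k = -(u0 * emb \<zeta> ^ k + u1 * emb (cnj \<zeta>) ^ k)" for k
  proof -
    define A where "A = Re (\<zeta> ^ k)"
    define B where "B = Im (\<zeta> ^ k)"
    have zk: "z^k = A *\<^sub>R 1 + B *\<^sub>R I"
      using pow_slice[OF D(2), of "qRe z" y k] D(1) by (simp add: A_def B_def \<zeta>_def)
    have e1: "emb \<zeta> ^ k = A *\<^sub>R 1 + B *\<^sub>R iq"
      unfolding emb_power[symmetric] iq_def A_def B_def by (simp add: quat_eq_iff)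
    have e2: "emb (cnj \<zeta>) ^ k = A *\<^sub>R 1 - B *\<^sub>R iq"
      unfolding emb_power[symmetric] iq_def A_def B_def complex_cnj_power[symmetric] by (simp add: quat_eq_iff del: complex_cnj_power)
    show ?thesis unfolding zk e1 e2 u0_def u1_def
      using rel_ident[of I A B, folded iq_def] by (simp add: algebra_simps eq_neg_iff_add_eq_0)
  qed
  have ff: "f z = -(u0 * f (emb \<zeta>) + u1 * f (emb (cnj \<zeta>)))"
  proof -
    define Z where "Z = (\<lambda>s::nat. if s = 0 then emb \<zeta> else if s = 1 then emb (cnj \<zeta>) else z)"
    define X where "X = (\<lambda>s::nat. if s = 0 then qcnj u0 else if s = 1 then qcnj u1 else 1)"
    have Zb: "\<forall>s<3. norm (Z s) < 1" using z nz by (simp add: Z_def)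
    note S = pick_form[OF Zb, of X f]
    have W: "(\<Sum>s<3. qcnj (X s) * Z s ^ k) = 0" for k
      using pw[of k] by (simp add: sum3 X_def Z_def algebra_simps eq_neg_iff_add_eq_0)
    define V where "V k = (\<Sum>s<3. qcnj (X s) * Z s ^ k * f (Z s))" for k
    have "(\<lambda>k. - qnormsq (V k)) sums qRe (\<Sum>s<3. \<Sum>t<3. qcnj (X s) * pick_matrix f Z s t * X t)"
      using S unfolding W V_def by simp
    then have S2: "(\<lambda>k. qnormsq (V k)) sums (- qRe (\<Sum>s<3. \<Sum>t<3. qcnj (X s) * pick_matrix f Z s t * X t))"
      using sums_minus by fastforce
    have "0 \<le> qRe (\<Sum>s<3. \<Sum>t<3. qcnj (X s) * pick_matrix f Z s t * X t)"
      by (rule form_nonneg[OF H Zb])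
    moreover have "sum (\<lambda>k. qnormsq (V k)) {0} \<le> suminf (\<lambda>k. qnormsq (V k))"
      by (rule sum_le_suminf) (use S2 sums_summable in \<open>auto simp: qnormsq_norm\<close>)
    ultimately have "qnormsq (V 0) \<le> 0" using sums_unique[OF S2] by simp
    then have "V 0 = 0" by (simp add: qnormsq_norm)
    then show ?thesis by (simp add: V_def sum3 X_def Z_def eq_neg_iff_add_eq_0 algebra_simps)
  qed
  show ?thesis by (rule that[OF nz pw ff])
qed

theorem theorem1p3:
  fixes f :: "quat \<Rightarrow> quat"
  assumes "\<forall>z :: nat \<Rightarrow> quat. (\<forall>i<3. z i \<in> qball) \<longrightarrow> quat_psd 3 (pick_matrix f z)"
  shows "f \<in> left_schur_class"
proof -
  note H = assms
  obtain c where cb: "\<forall>k. norm (c k) \<le> 2" and cs: "\<forall>\<zeta>. cmod \<zeta> < 1 \<longrightarrow> (\<lambda>k. emb \<zeta> ^ k * c k) sums f (emb \<zeta>)"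
    using slice_series[OF H] by blast
  have allsums: "(\<lambda>k. z^k * c k) sums f z" if z: "norm z < 1" for z
  proof -
    obtain \<zeta> u0 u1 where n: "cmod \<zeta> = norm z"
      and pw: "\<And>k. z^k = -(u0 * emb \<zeta> ^ k + u1 * emb (cnj \<zeta>) ^ k)"
      and ff: "f z = -(u0 * f (emb \<zeta>) + u1 * f (emb (cnj \<zeta>)))"
      using rep_formula[OF H z] by blast
    have s1: "(\<lambda>k. emb \<zeta> ^ k * c k) sums f (emb \<zeta>)" using cs n z by simp
    have s2: "(\<lambda>k. emb (cnj \<zeta>) ^ k * c k) sums f (emb (cnj \<zeta>))" using cs n z by simp
    have "(\<lambda>k. -(u0 * (emb \<zeta> ^ k * c k) + u1 * (emb (cnj \<zeta>) ^ k * c k))) sums (-(u0 * f (emb \<zeta>) + u1 * f (emb (cnj \<zeta>))))"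
      by (intro sums_minus sums_add sums_mult s1 s2)
    moreover have "z^k * c k = -(u0 * (emb \<zeta> ^ k * c k) + u1 * (emb (cnj \<zeta>) ^ k * c k))" for k
      unfolding pw by (simp add: algebra_simps)
    ultimately show ?thesis unfolding ff by simp
  qed
  have abss: "summable (\<lambda>k. norm (z ^ k * c k))" if z: "norm z < 1" for z
  proof (rule summable_comparison_test)
    show "summable (\<lambda>k. 2 * norm z ^ k)" by (rule summable_mult, rule summable_geometric) (use z in simp)
    show "\<exists>N. \<forall>n\<ge>N. norm (norm (z ^ n * c n)) \<le> 2 * norm z ^ n"
      using cb by (intro exI[of _ 0] allI impI) (simp add: norm_mult norm_power mult.commute mult_right_mono)
  qed
  have ls: "limsup (\<lambda>k. ereal (root k (norm (c k)))) \<le> 1"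
  proof -
    have "limsup (\<lambda>k. ereal (root k (norm (c k)))) \<le> limsup (\<lambda>k. ereal (root k 2))"
    proof (rule Limsup_mono)
      show "\<forall>\<^sub>F k in sequentially. ereal (root k (norm (c k))) \<le> ereal (root k 2)"
        using eventually_gt_at_top[of 0] by eventually_elim (use cb real_root_le_mono in auto)
    qed
    also have "limsup (\<lambda>k. ereal (root k 2)) = 1"
      by (rule lim_imp_Limsup) (auto intro: tendsto_ereal LIMSEQ_root_const simp: one_ereal_def)
    finally show ?thesis .
  qed
  show ?thesis unfolding left_schur_class_def qball_def
    using ls abss f_bound[OF H] sums_unique[OF allsums] by (intro CollectI exI[of _ c]) auto
qed

end
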